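(* Let $U\subset\mathbb R^n$ be a smooth bounded domain and $H:\mathbb R^n\to\mathbb R$ satisfy: (H1) $H$ is smooth and $H(0)<0$; (H2) $\lim_{|p|\to\infty}H(p)/|p|=\infty$; (H3) there exist $\gamma,\delta>0$ with $DH(p)\cdot p-\gamma H(p)\ge\delta$ for all $p\in\mathbb R^n$. For $0<\epsilon<1$ let $u^{\epsilon}$ be the solution of $H(Du^{\epsilon})=\epsilon\Delta u^{\epsilon}$ in $U$, $u^{\epsilon}=0$ on $\partial U$. Then there is a constant $C$ independent of $\epsilon$ such that $\|u^{\epsilon}\|_{L^\infty(U)}\le C$ and $\|Du^{\epsilon}\|_{L^\infty(U)}\le C$. *)

theory Defs
  imports "HOL-Analysis.Analysis"
begin

definition partial_deriv :: "'n::finite \<Rightarrow> (real^'n \<Rightarrow> real) \<Rightarrow> real^'n \<Rightarrow> real" where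
  "partial_deriv i f x = deriv (\<lambda>t. f (x + t *\<^sub>R axis i 1)) 0"

definition grad :: "(real^'n::finite \<Rightarrow> real) \<Rightarrow> real^'n \<Rightarrow> real^'n" where
  "grad f x = (\<chi> i. partial_deriv i f x)"

definition laplacian :: "(real^'n::finite \<Rightarrow> real) \<Rightarrow> real^'n \<Rightarrow> real" where
  "laplacian f x = (\<Sum>i\<in>UNIV. partial_deriv i (partial_deriv i f) x)"

fun C_k_on :: "nat \<Rightarrow> (real^'n::finite) set \<Rightarrow> (real^'n \<Rightarrow> real) \<Rightarrow> bool" where
  "C_k_on 0 S f = continuous_on S f"
| "C_k_on (Suc k) S f = (f differentiable_on S \<and> continuous_on S f \<and>
      (\<forall>i. C_k_on k S (partial_deriv i f)))"

definition smooth_on :: "(real^'n::finite) set \<Rightarrow> (real^'n \<Rightarrow> real) \<Rightarrow> bool" where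
  "smooth_on S f = (\<forall>k. C_k_on k S f)"

definition smooth_bounded_domain :: "(real^'n::finite) set \<Rightarrow> bool" where
  "smooth_bounded_domain U = (open U \<and> connected U \<and> U \<noteq> {} \<and> bounded U \<and>
     (\<forall>x\<in>frontier U. \<exists>r>0. \<exists>\<phi>. smooth_on (ball x r) \<phi> \<and>
        (\<forall>y\<in>ball x r. grad \<phi> y \<noteq> 0) \<and>
        U \<inter> ball x r = {y\<in>ball x r. \<phi> y < 0}))"

definition is_solution :: "(real^'n::finite \<Rightarrow> real) \<Rightarrow> real \<Rightarrow> (real^'n) set \<Rightarrow> (real^'n \<Rightarrow> real) \<Rightarrow> bool" where
  "is_solution H eps U u = (C_k_on 2 U u \<and> continuous_on (closure U) u \<and>
     (\<forall>x\<in>frontier U. u x = 0) \<and>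
     (\<forall>x\<in>U. H (grad u x) = eps * laplacian u x))"

end

theory Submission
  imports Defs
begin


lemma frechet_axis:
  fixes f :: "real^'n \<Rightarrow> real"
  assumes "(f has_derivative f') (at y)"
  shows "((\<lambda>t. f (y + t *\<^sub>R e)) has_real_derivative f' e) (at 0)"
proof -
  have bl: "bounded_linear f'" using assms has_derivative_bounded_linear by blast
  have "((\<lambda>t. y + t *\<^sub>R e) has_derivative (\<lambda>t. t *\<^sub>R e)) (at 0)"
    by (auto intro!: derivative_eq_intros)
  then have "((\<lambda>t. f (y + t *\<^sub>R e)) has_derivative (\<lambda>t. f' (t *\<^sub>R e))) (at 0)"
    using has_derivative_compose[of "\<lambda>t. y + t *\<^sub>R e" _ 0 UNIV f f'] assms by simp
  moreover have "(\<lambda>t. f' (t *\<^sub>R e)) = (*) (f' e)"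
    using linear_cmul[OF bounded_linear.linear[OF bl]] by (auto simp: mult.commute)
  ultimately show ?thesis by (simp add: has_field_derivative_def)
qed

lemma frechet_grad:
  fixes f :: "real^'n \<Rightarrow> real"
  assumes "(f has_derivative f') (at y)"
  shows "f' e = grad f y \<bullet> e"
proof -
  have bl: "linear f'" using assms has_derivative_bounded_linear bounded_linear.linear by blast
  have pd: "partial_deriv i f y = f' (axis i 1)" for i
    unfolding partial_deriv_def using frechet_axis[OF assms] DERIV_imp_deriv by blast
  have "f' e = f' (\<Sum>i\<in>UNIV. (e$i) *s axis i 1)" by (simp add: basis_expansion)
  also have "\<dots> = (\<Sum>i\<in>UNIV. e$i * f' (axis i 1))"
    using bl by (simp add: linear_sum linear_cmul scalar_mult_eq_scaleR)
  also have "\<dots> = grad f y \<bullet> e"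
    by (simp add: grad_def inner_vec_def pd mult.commute)
  finally show ?thesis .
qed

lemma dir_deriv:
  fixes f :: "real^'n \<Rightarrow> real"
  assumes "f differentiable (at (x + s *\<^sub>R e))"
  shows "((\<lambda>t. f (x + t *\<^sub>R e)) has_real_derivative (grad f (x + s *\<^sub>R e) \<bullet> e)) (at s)"
proof -
  obtain f' where d: "(f has_derivative f') (at (x + s *\<^sub>R e))"
    using assms differentiable_def by blast
  have "((\<lambda>t. f ((x + s *\<^sub>R e) + t *\<^sub>R e)) has_real_derivative (grad f (x + s *\<^sub>R e) \<bullet> e)) (at 0)"
    using frechet_axis[OF d] frechet_grad[OF d] by simp
  then have "((\<lambda>t. f (x + (t + s) *\<^sub>R e)) has_real_derivative (grad f (x + s *\<^sub>R e) \<bullet> e)) (at 0)"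
    by (simp add: algebra_simps scaleR_add_left)
  then show ?thesis using DERIV_shift[of "\<lambda>t. f (x + t *\<^sub>R e)" _ 0 s] by simp
qed

lemma grad_axis: "grad f y \<bullet> axis i 1 = partial_deriv i f y"
  by (simp add: grad_def inner_axis)



lemma max2:
  fixes g g' :: "real \<Rightarrow> real"
  assumes "\<delta> > 0" and der: "\<And>t. \<bar>t\<bar> < \<delta> \<Longrightarrow> (g has_real_derivative g' t) (at t)"
    and d2: "(g' has_real_derivative d) (at 0)"
    and mx: "\<And>t. \<bar>t\<bar> < \<delta> \<Longrightarrow> g t \<le> g 0"
  shows "g' 0 = 0 \<and> d \<le> 0"
proof -
  have g0: "g' 0 = 0"
    using DERIV_local_max[OF der[of 0] \<open>\<delta>>0\<close>] mx assms(1) by auto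
  moreover have "d \<le> 0"
  proof (rule ccontr)
    assume "\<not> d \<le> 0"
    then obtain d1 where d1: "d1 > 0" "\<And>h. h > 0 \<Longrightarrow> h < d1 \<Longrightarrow> g' 0 < g' (0 + h)"
      using DERIV_pos_inc_right[OF d2] by force
    define h where "h = min d1 \<delta> / 2"
    have h: "h > 0" "h < d1" "h < \<delta>" using d1 \<open>\<delta>>0\<close> by (auto simp: h_def)
    have "\<forall>x. 0 \<le> x \<and> x \<le> h \<longrightarrow> DERIV g x :> g' x" using der h by auto
    then obtain z where z: "z > 0" "z < h" "g h - g 0 = (h - 0) * g' z"
      using MVT2[of 0 h g g'] h by auto
    have "g' z > 0" using d1(2)[of z] z h g0 by auto
    have "h * g' z > 0" using h \<open>g' z > 0\<close> by simp
    then have "g h > g 0" using z by simp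
    then show False using mx[of h] h by auto
  qed
  ultimately show ?thesis by blast
qed

definition line_data :: "(real^'n \<Rightarrow> real) \<Rightarrow> real^'n \<Rightarrow> 'n \<Rightarrow> (real \<Rightarrow> real) \<Rightarrow> real \<Rightarrow> bool" where
  "line_data f x i g d \<longleftrightarrow> (\<exists>\<delta>>0. \<forall>t. \<bar>t\<bar> < \<delta> \<longrightarrow>
      ((\<lambda>s. f (x + s *\<^sub>R axis i 1)) has_real_derivative g t) (at t)) \<and> (g has_real_derivative d) (at 0)"

lemma MP_line:
  assumes mx: "\<exists>\<delta>>0. \<forall>y. dist y x < \<delta> \<longrightarrow> f1 y - f2 y \<le> f1 x - f2 x"
    and l1: "line_data f1 x i g1 d1" and l2: "line_data f2 x i g2 d2"
  shows "g1 0 = g2 0 \<and> d1 \<le> d2"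
proof -
  obtain \<delta>0 where \<delta>0: "\<delta>0 > 0" "\<forall>y. dist y x < \<delta>0 \<longrightarrow> f1 y - f2 y \<le> f1 x - f2 x" using mx by blast
  obtain \<delta>1 where \<delta>1: "\<delta>1 > 0" "\<forall>t. \<bar>t\<bar> < \<delta>1 \<longrightarrow> ((\<lambda>s. f1 (x + s *\<^sub>R axis i 1)) has_real_derivative g1 t) (at t)"
    and e1: "(g1 has_real_derivative d1) (at 0)" using l1 unfolding line_data_def by blast
  obtain \<delta>2 where \<delta>2: "\<delta>2 > 0" "\<forall>t. \<bar>t\<bar> < \<delta>2 \<longrightarrow> ((\<lambda>s. f2 (x + s *\<^sub>R axis i 1)) has_real_derivative g2 t) (at t)"
    and e2: "(g2 has_real_derivative d2) (at 0)" using l2 unfolding line_data_def by blast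
  define \<delta> where "\<delta> = min \<delta>0 (min \<delta>1 \<delta>2)"
  have "\<delta> > 0" using \<delta>0 \<delta>1 \<delta>2 by (simp add: \<delta>_def)
  have "g1 0 - g2 0 = 0 \<and> d1 - d2 \<le> 0"
  proof (rule max2[where g = "\<lambda>s. f1 (x + s *\<^sub>R axis i 1) - f2 (x + s *\<^sub>R axis i 1)"
        and g' = "\<lambda>t. g1 t - g2 t", OF \<open>\<delta> > 0\<close>])
    fix t :: real assume t: "\<bar>t\<bar> < \<delta>"
    show "((\<lambda>s. f1 (x + s *\<^sub>R axis i 1) - f2 (x + s *\<^sub>R axis i 1)) has_real_derivative g1 t - g2 t) (at t)"
      using \<delta>1 \<delta>2 t by (auto simp: \<delta>_def intro!: DERIV_diff)
    have "dist (x + t *\<^sub>R axis i 1) x = \<bar>t\<bar>" by (simp add: dist_norm norm_axis_1)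
    then show "f1 (x + t *\<^sub>R axis i 1) - f2 (x + t *\<^sub>R axis i 1) \<le> f1 (x + 0 *\<^sub>R axis i 1) - f2 (x + 0 *\<^sub>R axis i 1)"
      using \<delta>0 t by (auto simp: \<delta>_def)
  next
    show "((\<lambda>t. g1 t - g2 t) has_real_derivative d1 - d2) (at 0)" using e1 e2 by (rule DERIV_diff)
  qed
  then show ?thesis by simp
qed

lemma line_nice:
  fixes f :: "real^'n \<Rightarrow> real"
  assumes S: "open S" "x \<in> S" and d1: "\<forall>y\<in>S. f differentiable (at y)"
    and d2: "\<forall>y\<in>S. partial_deriv i f differentiable (at y)"
    and eq: "\<forall>y\<in>S. fe y = f y"
  shows "line_data fe x i (\<lambda>t. partial_deriv i f (x + t *\<^sub>R axis i 1)) (partial_deriv i (partial_deriv i f) x)"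
  unfolding line_data_def
proof
  obtain \<delta> where \<delta>: "\<delta> > 0" "ball x \<delta> \<subseteq> S" using S openE by blast
  have "open ((\<lambda>s::real. x + s *\<^sub>R axis i 1) -` S)"
    by (rule open_vimage[OF S(1)]) (auto intro!: continuous_intros)
  then have T: "open {s::real. x + s *\<^sub>R axis i 1 \<in> S}" by (simp add: vimage_def)
  show "\<exists>\<delta>>0. \<forall>t. \<bar>t\<bar> < \<delta> \<longrightarrow> ((\<lambda>s. fe (x + s *\<^sub>R axis i 1)) has_real_derivative partial_deriv i f (x + t *\<^sub>R axis i 1)) (at t)"
  proof (intro exI[of _ \<delta>] conjI allI impI)
    fix t :: real assume t: "\<bar>t\<bar> < \<delta>"
    have "dist x (x + t *\<^sub>R axis i 1) = \<bar>t\<bar>" by (simp add: dist_norm)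
    then have xt: "x + t *\<^sub>R axis i 1 \<in> S" using \<delta> t by auto
    have "((\<lambda>s. f (x + s *\<^sub>R axis i 1)) has_real_derivative partial_deriv i f (x + t *\<^sub>R axis i 1)) (at t)"
      using dir_deriv[of f x t "axis i 1"] d1 xt by (simp add: grad_axis)
    then show "((\<lambda>s. fe (x + s *\<^sub>R axis i 1)) has_real_derivative partial_deriv i f (x + t *\<^sub>R axis i 1)) (at t)"
      by (rule has_field_derivative_transform_within_open[OF _ T]) (use xt eq in auto)
  qed (use \<delta> in auto)
  show "((\<lambda>t. partial_deriv i f (x + t *\<^sub>R axis i 1)) has_real_derivative partial_deriv i (partial_deriv i f) x) (at 0)"
  proof -
    have "((\<lambda>t. partial_deriv i f (x + t *\<^sub>R axis i 1)) has_real_derivative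
        grad (partial_deriv i f) (x + 0 *\<^sub>R axis i 1) \<bullet> axis i 1) (at 0)"
      by (rule dir_deriv) (use d2 S in simp)
    then show ?thesis by (simp add: grad_axis)
  qed
qed

lemma line_affine:
  assumes l: "line_data f (m + k *\<^sub>R x) i g d" and k: "k > 0"
  shows "line_data (\<lambda>y. A * f (m + k *\<^sub>R y)) x i (\<lambda>t. A * k * g (k * t)) (A * k * k * d)"
  unfolding line_data_def
proof
  obtain \<delta> where \<delta>: "\<delta> > 0" "\<forall>t. \<bar>t\<bar> < \<delta> \<longrightarrow> ((\<lambda>s. f (m + k *\<^sub>R x + s *\<^sub>R axis i 1)) has_real_derivative g t) (at t)"
    and e: "(g has_real_derivative d) (at 0)" using l unfolding line_data_def by blast
  show "\<exists>\<delta>>0. \<forall>t. \<bar>t\<bar> < \<delta> \<longrightarrow> ((\<lambda>s. A * f (m + k *\<^sub>R (x + s *\<^sub>R axis i 1))) has_real_derivative A * k * g (k * t)) (at t)"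
  proof (intro exI[of _ "\<delta> / k"] conjI allI impI)
    fix t :: real assume t: "\<bar>t\<bar> < \<delta> / k"
    have "\<bar>k * t\<bar> < \<delta>" using t k by (simp add: abs_mult field_simps)
    then have D: "((\<lambda>s. f (m + k *\<^sub>R x + s *\<^sub>R axis i 1)) has_real_derivative g (k * t)) (at (k * t))" using \<delta> by auto
    have "((\<lambda>s. f (m + k *\<^sub>R x + (k * s) *\<^sub>R axis i 1)) has_real_derivative g (k * t) * k) (at t)"
      using DERIV_chain2[where g="\<lambda>s. k * s" and x=t, OF D, of k] by (auto intro!: derivative_eq_intros)
    then have "((\<lambda>s. A * f (m + k *\<^sub>R x + (k * s) *\<^sub>R axis i 1)) has_real_derivative A * (g (k * t) * k)) (at t)"
      by (rule DERIV_cmult)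
    then show "((\<lambda>s. A * f (m + k *\<^sub>R (x + s *\<^sub>R axis i 1))) has_real_derivative A * k * g (k * t)) (at t)"
      by (simp add: scaleR_add_right add.assoc mult.commute mult.left_commute mult.assoc)
  qed (use \<delta> k in auto)
  have e': "(g has_real_derivative d) (at ((\<lambda>t. k * t) 0))" using e by simp
  have gk: "((\<lambda>t. g (k * t)) has_real_derivative d * k) (at 0)"
    using DERIV_chain2[where g="\<lambda>t. k * t" and x=0, OF e'] by (auto intro!: derivative_eq_intros)
  show "((\<lambda>t. A * k * g (k * t)) has_real_derivative A * k * k * d) (at 0)"
    using DERIV_cmult[OF gk, where c="A * k"] by (simp add: ac_simps)
qed



lemma sol_nice:
  assumes "is_solution H eps U u" "open U"
  shows "\<forall>y\<in>U. u differentiable (at y)" "\<forall>i. \<forall>y\<in>U. partial_deriv i u differentiable (at y)"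
    "continuous_on (closure U) u" "\<forall>x\<in>frontier U. u x = 0" "\<forall>x\<in>U. H (grad u x) = eps * laplacian u x"
proof -
  have c2: "C_k_on 2 U u" using assms(1) by (simp add: is_solution_def)
  then have "u differentiable_on U" by (simp add: numeral_2_eq_2)
  then show "\<forall>y\<in>U. u differentiable (at y)"
    using assms(2) differentiable_on_eq_differentiable_at by blast
  have "\<forall>i. partial_deriv i u differentiable_on U" using c2 by (simp add: numeral_2_eq_2)
  then show "\<forall>i. \<forall>y\<in>U. partial_deriv i u differentiable (at y)"
    using assms(2) differentiable_on_eq_differentiable_at by blast
qed (use assms in \<open>auto simp: is_solution_def\<close>)

definition ext0 :: "(real^'n) set \<Rightarrow> (real^'n \<Rightarrow> real) \<Rightarrow> real^'n \<Rightarrow> real" where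
  "ext0 U u y = (if y \<in> U then u y else 0)"

lemma ext0_cont:
  assumes "continuous_on (closure U) u" "\<forall>x\<in>frontier U. u x = 0" "open U"
  shows "continuous_on UNIV (ext0 U u)"
proof -
  have eq: "ext0 U u y = u y" if "y \<in> closure U" for y
    using assms(2,3) that by (cases "y \<in> U") (auto simp: ext0_def frontier_def interior_open)
  have "continuous_on (closure U) (ext0 U u)"
    by (rule continuous_on_eq[OF assms(1)]) (simp add: eq)
  moreover have eq2: "ext0 U u y = 0" if "y \<in> - U" for y using that by (simp add: ext0_def)
  have "continuous_on (- U) (ext0 U u)"
    by (rule continuous_on_eq[OF continuous_on_const[of _ 0]]) (simp add: eq2)
  moreover
  ultimately have "continuous_on (closure U \<union> - U) (ext0 U u)"
    using assms(3) by (intro continuous_on_closed_Un) auto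
  moreover have "closure U \<union> - U = UNIV" using closure_subset by auto
  ultimately show ?thesis by simp
qed

lemma gen_max:
  fixes u :: "real^'n \<Rightarrow> real"
  assumes sol: "is_solution H eps U u" and U: "open U" and x: "x \<in> U"
    and ld: "\<And>i. line_data V x i (gV i) (dV i)"
    and mx: "\<exists>\<delta>>0. \<forall>y. dist y x < \<delta> \<longrightarrow> ext0 U u y - V y \<le> ext0 U u x - V x"
  shows "grad u x = (\<chi> i. gV i 0)" "laplacian u x \<le> (\<Sum>i\<in>UNIV. dV i)"
proof -
  note n = sol_nice[OF sol U]
  have l: "line_data (ext0 U u) x i (\<lambda>t. partial_deriv i u (x + t *\<^sub>R axis i 1)) (partial_deriv i (partial_deriv i u) x)" for i
    by (rule line_nice[OF U x]) (use n in \<open>auto simp: ext0_def\<close>)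
  have r: "partial_deriv i u x = gV i 0 \<and> partial_deriv i (partial_deriv i u) x \<le> dV i" for i
    using MP_line[OF mx l ld] by simp
  show "grad u x = (\<chi> i. gV i 0)" using r by (simp add: grad_def)
  show "laplacian u x \<le> (\<Sum>i\<in>UNIV. dV i)" unfolding laplacian_def using r by (intro sum_mono) auto
qed

lemma gen_min:
  fixes u :: "real^'n \<Rightarrow> real"
  assumes sol: "is_solution H eps U u" and U: "open U" and x: "x \<in> U"
    and ld: "\<And>i. line_data V x i (gV i) (dV i)"
    and mx: "\<exists>\<delta>>0. \<forall>y. dist y x < \<delta> \<longrightarrow> V y - ext0 U u y \<le> V x - ext0 U u x"
  shows "grad u x = (\<chi> i. gV i 0)" "(\<Sum>i\<in>UNIV. dV i) \<le> laplacian u x"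
proof -
  note n = sol_nice[OF sol U]
  have l: "line_data (ext0 U u) x i (\<lambda>t. partial_deriv i u (x + t *\<^sub>R axis i 1)) (partial_deriv i (partial_deriv i u) x)" for i
    by (rule line_nice[OF U x]) (use n in \<open>auto simp: ext0_def\<close>)
  have r: "partial_deriv i u x = gV i 0 \<and> dV i \<le> partial_deriv i (partial_deriv i u) x" for i
    using MP_line[OF mx ld l] by simp
  show "grad u x = (\<chi> i. gV i 0)" using r by (simp add: grad_def)
  show "(\<Sum>i\<in>UNIV. dV i) \<le> laplacian u x" unfolding laplacian_def using r by (intro sum_mono) auto
qed

lemma maxp:
  fixes w :: "real^'n \<Rightarrow> real"
  assumes O: "open \<Omega>" "bounded \<Omega>" and c: "continuous_on (closure \<Omega>) w"
    and int: "\<And>x. x \<in> \<Omega> \<Longrightarrow> \<exists>\<delta>>0. \<forall>y. dist y x < \<delta> \<longrightarrow> w y \<le> w x \<Longrightarrow> False"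
    and fr: "\<And>y. y \<in> frontier \<Omega> \<Longrightarrow> w y \<le> M"
  shows "\<forall>y\<in>closure \<Omega>. w y \<le> M"
proof (cases "\<Omega> = {}")
  case True then show ?thesis by simp
next
  case False
  have "compact (closure \<Omega>)" using O by (simp add: compact_closure)
  then obtain p where p: "p \<in> closure \<Omega>" "\<forall>y\<in>closure \<Omega>. w y \<le> w p"
    using continuous_attains_sup[OF _ _ c] False by auto
  have "p \<notin> \<Omega>"
  proof
    assume "p \<in> \<Omega>"
    then obtain \<delta> where "\<delta> > 0" "ball p \<delta> \<subseteq> \<Omega>" using O openE by blast
    have "\<forall>y. dist y p < \<delta> \<longrightarrow> w y \<le> w p"
    proof (intro allI impI)
      fix y assume "dist y p < \<delta>"
      then have "y \<in> \<Omega>" using \<open>ball p \<delta> \<subseteq> \<Omega>\<close> by (auto simp: dist_commute)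
      then show "w y \<le> w p" using p closure_subset[of \<Omega>] by auto
    qed
    then show False using int[OF \<open>p \<in> \<Omega>\<close>] \<open>\<delta>>0\<close> by blast
  qed
  then have "p \<in> frontier \<Omega>" using p O by (simp add: frontier_def interior_open)
  then show ?thesis using p fr by force
qed

lemma line_const: "line_data (\<lambda>y. c) x i (\<lambda>t. 0) 0"
  unfolding line_data_def by (auto intro: exI[of _ 1])

lemma sol_nonneg:
  fixes u :: "real^'n \<Rightarrow> real"
  assumes sol: "is_solution H eps U u" and U: "open U" "bounded U" and eps: "eps > 0" and H0: "H 0 < 0"
  shows "ext0 U u y \<ge> 0"
proof -
  note n = sol_nice[OF sol U(1)]
  have mp: "\<forall>y\<in>closure U. (\<lambda>y. 0 - ext0 U u y) y \<le> 0"
  proof (rule maxp[OF U])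
    show "continuous_on (closure U) (\<lambda>y. 0 - ext0 U u y)"
      using ext0_cont[OF n(3,4) U(1)] by (auto intro!: continuous_intros intro: continuous_on_subset)
  next
    fix x assume x: "x \<in> U" and mx: "\<exists>\<delta>>0. \<forall>y. dist y x < \<delta> \<longrightarrow> 0 - ext0 U u y \<le> 0 - ext0 U u x"
    have g: "grad u x = (\<chi> i. 0)" and l: "(\<Sum>i\<in>UNIV. 0) \<le> laplacian u x"
      using gen_min[OF sol U(1) x line_const mx] by auto
    have "H (grad u x) = eps * laplacian u x" using n(5) x by blast
    moreover have "grad u x = 0" using g by (simp add: vec_eq_iff)
    ultimately have "H 0 \<ge> 0" using l eps by simp
    then show False using H0 by simp
  next
    fix y assume "y \<in> frontier U"
    then have "y \<notin> U" using U(1) by (simp add: frontier_def interior_open)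
    then show "0 - ext0 U u y \<le> 0" by (simp add: ext0_def)
  qed
  show ?thesis
  proof (cases "y \<in> U")
    case True then have "y \<in> closure U" using closure_subset by blast
    with mp show ?thesis by simp
  qed (simp add: ext0_def)
qed



lemma dinvpow:
  fixes P :: "real \<Rightarrow> real"
  assumes "(P has_real_derivative P') (at s)" "P s \<noteq> 0"
  shows "((\<lambda>s. 1 / (P s) ^ N) has_real_derivative (- (real N * P' / (P s) ^ (N + 1)))) (at s)"
proof -
  have D: "((\<lambda>s. inverse ((P s) ^ N)) has_real_derivative
      - ((real N * (P' * P s ^ (N - Suc 0))) * inverse ((P s ^ N) ^ Suc (Suc 0)))) (at s)"
    by (rule DERIV_inverse_fun[OF DERIV_power[OF assms(1)]]) (use assms(2) in simp)
  have eq: "- ((real N * (P' * P s ^ (N - Suc 0))) * inverse ((P s ^ N) ^ Suc (Suc 0))) = - (real N * P' / (P s) ^ (N + 1))"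
  proof (cases N)
    case 0 then show ?thesis by simp
  next
    case (Suc m)
    then show ?thesis using assms(2) by (simp add: field_simps power2_eq_square power_add)
  qed
  have f: "(\<lambda>s. 1 / (P s) ^ N) = (\<lambda>s. inverse ((P s) ^ N))" by (simp add: divide_inverse)
  show ?thesis unfolding f using D[unfolded eq] .
qed

lemma norm_line_sq:
  fixes w :: "real^'n"
  shows "(norm (w + s *\<^sub>R axis i 1))^2 = (norm w)^2 + 2 * (w $ i) * s + s^2"
  unfolding power2_norm_eq_inner
  by (simp add: inner_add_left inner_add_right inner_axis inner_axis' inner_axis_axis inner_commute algebra_simps power2_eq_square)

lemma pow_diff_le:
  fixes a b :: real
  assumes "0 \<le> a" "a \<le> b"
  shows "b ^ Suc m - a ^ Suc m \<le> real (Suc m) * b ^ m * (b - a)"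
proof (induction m)
  case 0 then show ?case by simp
next
  case (Suc m)
  have "b ^ Suc (Suc m) - a ^ Suc (Suc m) = b * (b ^ Suc m - a ^ Suc m) + a ^ Suc m * (b - a)"
    by (simp add: algebra_simps)
  also have "\<dots> \<le> b * (real (Suc m) * b ^ m * (b - a)) + b ^ Suc m * (b - a)"
    using Suc assms by (intro add_mono mult_left_mono mult_right_mono power_mono) auto
  also have "\<dots> = real (Suc (Suc m)) * b ^ Suc m * (b - a)" by (simp add: algebra_simps)
  finally show ?case .
qed

lemma inv_pow_lip:
  fixes a b :: real
  assumes "0 < a" "a \<le> b" "M > 0"
  shows "1 / a ^ M - 1 / b ^ M \<le> real M * (b - a) / a ^ (M + 1)"
proof -
  obtain m where M: "M = Suc m" using assms(3) gr0_implies_Suc by blast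
  have b: "b > 0" using assms by simp
  have "1 / a ^ M - 1 / b ^ M = (b ^ M - a ^ M) / (a ^ M * b ^ M)"
    using assms b by (simp add: field_simps)
  also have "\<dots> \<le> (real M * b ^ m * (b - a)) / (a ^ M * b ^ M)"
    using pow_diff_le[OF less_imp_le[OF assms(1)] assms(2), of m] M assms b
    by (intro divide_right_mono) auto
  also have "\<dots> = real M * (b - a) / (a ^ M * b)"
  proof -
    have "b ^ M = b ^ m * b" using M by simp
    moreover have "b ^ m > 0" using b by simp
    ultimately show ?thesis using b assms(1) by (simp add: field_simps)
  qed
  also have "\<dots> \<le> real M * (b - a) / (a ^ M * a)"
    using assms b by (intro divide_left_mono mult_left_mono mult_nonneg_nonneg) auto
  also have "\<dots> = real M * (b - a) / a ^ (M + 1)" by (simp add: mult.commute)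
  finally show ?thesis .
qed



definition Vb :: "real \<Rightarrow> real \<Rightarrow> real^'n \<Rightarrow> real^'n \<Rightarrow> real" where
  "Vb K \<rho> z y = K * (1 / \<rho> ^ (2 * CARD('n)) - 1 / ((norm (y - z))^2) ^ CARD('n))"

lemma Vb_line:
  fixes x z :: "real^'n"
  assumes "x \<noteq> z"
  defines "N \<equiv> CARD('n)" and "Q \<equiv> (norm (x - z))^2"
  shows "line_data (Vb K \<rho> z) x i
     (\<lambda>t. K * real N * (2 * (x - z) $ i + 2 * t) / (Q + 2 * (x - z) $ i * t + t^2) ^ (N + 1))
     (K * real N * (2 / Q ^ (N + 1) - real (N + 1) * (2 * (x - z) $ i) ^ 2 / Q ^ (N + 2)))"
proof -
  define a where "a = (x - z) $ i"
  define P where "P t = Q + 2 * a * t + t^2" for t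
  have fn1: "(\<lambda>s. Vb K \<rho> z (x + s *\<^sub>R axis i 1)) = (\<lambda>s. K * (1 / \<rho> ^ (2 * N) - 1 / (P s) ^ N))"
  proof
    fix s
    have "x + s *\<^sub>R axis i 1 - z = (x - z) + s *\<^sub>R axis i 1" by (simp add: algebra_simps)
    then show "Vb K \<rho> z (x + s *\<^sub>R axis i 1) = K * (1 / \<rho> ^ (2 * N) - 1 / (P s) ^ N)"
      unfolding Vb_def P_def Q_def a_def N_def by (simp only: norm_line_sq)
  qed
  have Q0: "Q > 0" using assms(1) by (simp add: Q_def)
  have Ppos: "P t > 0" if "\<bar>t\<bar> < norm (x - z)" for t
  proof -
    have "norm (x - z) \<le> norm ((x - z) + t *\<^sub>R axis i 1) + \<bar>t\<bar>"
      using norm_triangle_ineq4[of "x - z + t *\<^sub>R axis i 1" "t *\<^sub>R axis i 1"] by simp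
    then have "norm ((x - z) + t *\<^sub>R axis i 1) > 0" using that by linarith
    moreover have "P t = (norm ((x - z) + t *\<^sub>R axis i 1))^2"
      unfolding P_def Q_def a_def by (simp only: norm_line_sq)
    ultimately show ?thesis by simp
  qed
  have dP: "(P has_real_derivative 2 * a + 2 * t) (at t)" for t
    unfolding P_def by (auto intro!: derivative_eq_intros)
  show ?thesis unfolding line_data_def
  proof (intro conjI exI[of _ "norm (x - z)"] allI impI)
    show "norm (x - z) > 0" using assms(1) by simp
    fix t :: real assume t: "\<bar>t\<bar> < norm (x - z)"
    have "((\<lambda>s. K * (1 / \<rho> ^ (2 * N) - 1 / (P s) ^ N)) has_real_derivative
        K * (0 - (- (real N * (2 * a + 2 * t) / (P t) ^ (N + 1))))) (at t)"
      using Ppos[OF t] by (intro DERIV_cmult DERIV_diff DERIV_const dinvpow dP) simp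
    then show "((\<lambda>s. Vb K \<rho> z (x + s *\<^sub>R axis i 1)) has_real_derivative
        K * real N * (2 * (x - z) $ i + 2 * t) / (Q + 2 * (x - z) $ i * t + t\<^sup>2) ^ (N + 1)) (at t)"
      unfolding fn1 by (simp add: P_def a_def mult.assoc)
  next
    have P0: "P 0 = Q" by (simp add: P_def)
    have "((\<lambda>t. K * real N * ((2 * a + 2 * t) * (1 / (P t) ^ (N + 1)))) has_real_derivative
        K * real N * ((2 * a + 2 * 0) * (- (real (N + 1) * (2 * a + 2 * 0) / (P 0) ^ (N + 1 + 1))) +
           2 * (1 / (P 0) ^ (N + 1)))) (at 0)"
      using Q0 P0 by (intro DERIV_cmult DERIV_mult' dinvpow dP) (auto intro!: derivative_eq_intros)
    then show "((\<lambda>t. K * real N * (2 * (x - z) $ i + 2 * t) / (Q + 2 * (x - z) $ i * t + t\<^sup>2) ^ (N + 1))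
        has_real_derivative K * real N * (2 / Q ^ (N + 1) - real (N + 1) * (2 * (x - z) $ i)\<^sup>2 / Q ^ (N + 2))) (at 0)"
      unfolding P0 by (simp add: P_def a_def field_simps power2_eq_square)
  qed
qed



lemma norm_sq_sum: "(norm (w::real^'n))^2 = (\<Sum>i\<in>UNIV. (w $ i)^2)"
  unfolding power2_norm_eq_inner by (simp add: inner_vec_def power2_eq_square)

lemma barrier:
  fixes u :: "real^'n \<Rightarrow> real" and z x0 :: "real^'n"
  assumes sol: "is_solution H eps U u" and U: "open U" "bounded U" and eps: "eps > 0"
    and R: "R > 0" and HR: "\<forall>p. norm p \<ge> R \<longrightarrow> H p > 0"
    and \<rho>: "\<rho> > 0" and ext: "ball z \<rho> \<inter> U = {}" and x0: "dist x0 z = \<rho>"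
    and D: "\<forall>y\<in>U. norm (y - z) \<le> D" and D0: "D > 0"
  shows "ext0 U u y \<le> (R * D ^ (2 * CARD('n) + 1)) * real (2 * CARD('n)) * norm (y - x0) / \<rho> ^ (2 * CARD('n) + 1)"
proof -
  define N where "N = CARD('n)"
  have N1: "N \<ge> 1" unfolding N_def by (simp add: Suc_leI)
  define K where "K = R * D ^ (2 * N + 1)"
  note n = sol_nice[OF sol U(1)]
  have far: "norm (y - z) \<ge> \<rho>" if "y \<in> closure U" for y
  proof -
    have "ball z \<rho> \<inter> closure U = {}" using ext open_Int_closure_eq_empty[of "ball z \<rho>" U] by simp
    then have "y \<notin> ball z \<rho>" using that by blast
    then show ?thesis by (simp add: dist_norm norm_minus_commute)
  qed
  have Dpos: "D > 0" if "x \<in> U" for x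
  proof -
    have "x \<in> closure U" using that closure_subset by blast
    then have "\<rho> \<le> norm (x - z)" by (rule far)
    then show ?thesis using D that \<rho> by force
  qed
  have Vnn: "Vb K \<rho> z y \<ge> 0" if "y \<in> closure U" "K \<ge> 0" for y K
  proof -
    have "\<rho> ^ (2 * N) \<le> norm (y - z) ^ (2 * N)" using far[OF that(1)] \<rho> by (intro power_mono) auto
    then have "1 / ((norm (y - z))^2) ^ N \<le> 1 / \<rho> ^ (2 * N)"
      using \<rho> by (simp add: power_mult[symmetric] frac_le)
    then show ?thesis using that(2) unfolding Vb_def N_def[symmetric] by simp
  qed
  have main: "\<forall>y\<in>closure U. (\<lambda>y. ext0 U u y - Vb K \<rho> z y) y \<le> 0"
  proof (rule maxp[OF U])
    have "continuous_on (closure U) (Vb K \<rho> z)"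
    proof -
      have "\<forall>y\<in>closure U. ((norm (y - z))^2) ^ CARD('n) \<noteq> 0" using far \<rho> by force
      then show ?thesis unfolding Vb_def by (auto intro!: continuous_intros)
    qed
    then show "continuous_on (closure U) (\<lambda>y. ext0 U u y - Vb K \<rho> z y)"
      using ext0_cont[OF n(3,4) U(1)] by (auto intro!: continuous_intros intro: continuous_on_subset)
  next
    fix x assume x: "x \<in> U" and mx: "\<exists>\<delta>>0. \<forall>y. dist y x < \<delta> \<longrightarrow> ext0 U u y - Vb K \<rho> z y \<le> ext0 U u x - Vb K \<rho> z x"
    have "z \<in> ball z \<rho>" using \<rho> by simp
    then have "z \<notin> U" using ext by blast
    then have xz: "x \<noteq> z" using x by auto
    define Q where "Q = (norm (x - z))^2"
    have Q0: "Q > 0" using xz by (simp add: Q_def)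
    have DP: "D > 0" using Dpos[OF x] .
    have Kpos: "K > 0" unfolding K_def using R DP by simp
    note ld = Vb_line[OF xz, of K \<rho>, folded N_def Q_def]
    have g: "grad u x = (\<chi> i. K * real N * (2 * (x - z) $ i + 2 * 0) / (Q + 2 * (x - z) $ i * 0 + 0^2) ^ (N + 1))"
      and l: "laplacian u x \<le> (\<Sum>i\<in>UNIV. K * real N * (2 / Q ^ (N + 1) - real (N + 1) * (2 * (x - z) $ i) ^ 2 / Q ^ (N + 2)))"
      using gen_max[OF sol U(1) x ld mx] by auto
    have gv: "grad u x = (2 * K * real N / Q ^ (N + 1)) *\<^sub>R (x - z)"
      unfolding g by (simp add: vec_eq_iff)
    have sq: "(\<Sum>i\<in>UNIV. ((x - z) $ i)^2) = Q" by (simp only: Q_def norm_sq_sum)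
    have trm: "K * real N * (2 / Q ^ (N + 1) - real (N + 1) * (2 * (x - z) $ i) ^ 2 / Q ^ (N + 2))
        = K * real N * 2 / Q ^ (N + 1) - (4 * K * real N * real (N + 1) / Q ^ (N + 2)) * ((x - z) $ i)^2" for i
      using Q0 by (simp add: field_simps power2_eq_square)
    have "(\<Sum>i\<in>UNIV. K * real N * (2 / Q ^ (N + 1) - real (N + 1) * (2 * (x - z) $ i) ^ 2 / Q ^ (N + 2)))
        = real N * (K * real N * 2 / Q ^ (N + 1)) - (4 * K * real N * real (N + 1) / Q ^ (N + 2)) * (\<Sum>i\<in>UNIV. ((x - z) $ i)^2)"
      unfolding trm by (simp add: sum_subtractf sum_distrib_left N_def)
    also have "\<dots> = K * real N * (2 * real N / Q ^ (N + 1) - 4 * real (N + 1) / Q ^ (N + 1))"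
      using Q0 unfolding sq by (simp add: power_add field_simps)
    also have "\<dots> < 0" using Kpos N1 Q0 by (intro mult_pos_neg) (auto simp: field_simps)
    finally have lneg: "laplacian u x < 0" using l by simp
    have "R \<le> norm (grad u x)"
    proof -
      define d where "d = norm (x - z)"
      have d0: "d > 0" using xz by (simp add: d_def)
      have dD: "d \<le> D" using D x by (simp add: d_def)
      have "norm (grad u x) = 2 * K * real N / Q ^ (N + 1) * d"
        unfolding gv d_def using Kpos Q0 by simp
      also have "\<dots> = 2 * K * real N / d ^ (2 * N + 1)"
      proof -
        have "Q ^ (N + 1) = d ^ (2 * (N + 1))"
          unfolding Q_def d_def[symmetric] by (rule power_mult[symmetric])
        also have "2 * (N + 1) = Suc (2 * N + 1)" by simp
        finally have "Q ^ (N + 1) = d ^ (2 * N + 1) * d" by (simp only: power_Suc2)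
        then show ?thesis using d0 by simp
      qed
      also have "\<dots> \<ge> 2 * K * real N / D ^ (2 * N + 1)"
        using d0 dD Kpos N1 by (intro divide_left_mono power_mono mult_pos_pos) auto
      also have "2 * K * real N / D ^ (2 * N + 1) = 2 * real N * R" using DP by (simp add: K_def)
      finally show ?thesis using N1 R by (smt (verit) of_nat_1 of_nat_mono mult_le_cancel_right2)
    qed
    then have "H (grad u x) > 0" using HR by blast
    moreover have "H (grad u x) = eps * laplacian u x" using n(5) x by blast
    moreover have "eps * laplacian u x < 0" using lneg eps by (rule mult_pos_neg[rotated])
    ultimately show False by simp
  next
    fix y assume y: "y \<in> frontier U"
    then have "y \<notin> U" using U(1) by (simp add: frontier_def interior_open)
    moreover have "y \<in> closure U" using y by (simp add: frontier_def)
    moreover have "K \<ge> 0"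
    proof -
      have "U \<noteq> {}" using y by (auto simp: frontier_def)
      then obtain x where "x \<in> U" by blast
      then have "D > 0" by (rule Dpos)
      then show ?thesis unfolding K_def using R by simp
    qed
    ultimately show "ext0 U u y - Vb K \<rho> z y \<le> 0" using Vnn by (simp add: ext0_def)
  qed
  have K0: "K > 0" unfolding K_def using R D0 by simp
  show ?thesis
  proof (cases "y \<in> U")
    case True
    then have yc: "y \<in> closure U" using closure_subset by blast
    define b where "b = norm (y - z)"
    have b\<rho>: "\<rho> \<le> b" using far[OF yc] by (simp add: b_def)
    have "ext0 U u y \<le> Vb K \<rho> z y" using main yc by simp
    also have "Vb K \<rho> z y = K * (1 / \<rho> ^ (2 * N) - 1 / b ^ (2 * N))"
      unfolding Vb_def b_def N_def by (simp add: power_mult)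
    also have "\<dots> \<le> K * (real (2 * N) * (b - \<rho>) / \<rho> ^ (2 * N + 1))"
      using inv_pow_lip[OF \<rho> b\<rho>, of "2 * N"] N1 K0 by (intro mult_left_mono) auto
    also have "\<dots> \<le> K * (real (2 * N) * norm (y - x0) / \<rho> ^ (2 * N + 1))"
    proof -
      have "b \<le> norm (y - x0) + norm (x0 - z)" unfolding b_def
        using norm_triangle_ineq[of "y - x0" "x0 - z"] by simp
      then have "b - \<rho> \<le> norm (y - x0)" using x0 by (simp add: dist_norm)
      then show ?thesis using K0 \<rho> by (intro mult_left_mono divide_right_mono mult_left_mono) auto
    qed
    finally show ?thesis by (simp add: K_def N_def)
  next
    case False
    then show ?thesis using R D0 \<rho> by (simp add: ext0_def)
  qed

qed



lemma smooth_diff: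
  assumes "smooth_on UNIV H"
  shows "H differentiable (at y)"
proof -
  have "C_k_on 1 UNIV H" using assms by (simp add: smooth_on_def)
  then have "H differentiable_on UNIV" by simp
  then show ?thesis by (simp add: differentiable_on_eq_differentiable_at)
qed

lemma scal:
  fixes H :: "real^'n \<Rightarrow> real"
  assumes sm: "smooth_on UNIV H" and H3: "\<forall>p. grad H p \<bullet> p - \<gamma> * H p \<ge> \<delta>" and \<delta>: "\<delta> > 0"
    and \<mu>: "0 < \<mu>" "\<mu> < 1"
  shows "H (\<mu> *\<^sub>R p) < \<mu> powr \<gamma> * H p"
proof -
  define g where "g s = H (s *\<^sub>R p) * s powr (- \<gamma>)" for s
  define g' where "g' s = (grad H (s *\<^sub>R p) \<bullet> p) * s powr (- \<gamma>) + H (s *\<^sub>R p) * ((- \<gamma>) * s powr (- \<gamma> - 1))" for s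
  have der: "(g has_real_derivative g' s) (at s)" if "s > 0" for s
  proof -
    have a: "((\<lambda>s. H (0 + s *\<^sub>R p)) has_real_derivative grad H (0 + s *\<^sub>R p) \<bullet> p) (at s)"
      by (rule dir_deriv) (rule smooth_diff[OF sm])
    have b: "((\<lambda>s. s powr (- \<gamma>)) has_real_derivative (- \<gamma>) * s powr (- \<gamma> - 1)) (at s)"
      using has_real_derivative_powr[OF that] .
    show ?thesis using DERIV_mult'[OF a b] unfolding g_def g'_def by simp
  qed
  have pos: "g' s > 0" if "s > 0" for s
  proof -
    have e: "s powr (- \<gamma>) = s * s powr (- \<gamma> - 1)"
    proof -
      have "s powr (- \<gamma>) = s powr (1 + (- \<gamma> - 1))" by simp
      also have "\<dots> = s powr 1 * s powr (- \<gamma> - 1)" by (rule powr_add)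
      also have "\<dots> = s * s powr (- \<gamma> - 1)" using that by simp
      finally show ?thesis .
    qed
    have "g' s = s powr (- \<gamma> - 1) * (grad H (s *\<^sub>R p) \<bullet> (s *\<^sub>R p) - \<gamma> * H (s *\<^sub>R p))"
      unfolding g'_def e by (simp add: algebra_simps)
    moreover have "grad H (s *\<^sub>R p) \<bullet> (s *\<^sub>R p) - \<gamma> * H (s *\<^sub>R p) > 0" using H3 \<delta>
      by (smt (verit))
    ultimately show ?thesis using that by simp
  qed
  have "\<forall>x. \<mu> \<le> x \<and> x \<le> 1 \<longrightarrow> DERIV g x :> g' x" using der \<mu> by auto
  then obtain z where z: "z > \<mu>" "z < 1" "g 1 - g \<mu> = (1 - \<mu>) * g' z"
    using MVT2[of \<mu> 1 g g'] \<mu> by auto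
  have "(1 - \<mu>) * g' z > 0" using pos[of z] z \<mu> by simp
  then have "g \<mu> < g 1" using z by simp
  then have "H (\<mu> *\<^sub>R p) * \<mu> powr (- \<gamma>) < H p" by (simp add: g_def)
  then have ineq: "H (\<mu> *\<^sub>R p) * \<mu> powr (- \<gamma>) * \<mu> powr \<gamma> < H p * \<mu> powr \<gamma>"
    using \<mu> by (intro mult_strict_right_mono) auto
  have c: "\<mu> powr (- \<gamma>) * \<mu> powr \<gamma> = 1" using \<mu> by (simp add: powr_minus)
  show ?thesis using ineq by (simp only: mult.assoc c mult_1_right) (simp add: mult.commute)
qed



lemma comp_mu:
  fixes u :: "real^'n \<Rightarrow> real" and h :: "real^'n"
  assumes sol: "is_solution H eps U u" and U: "open U" "bounded U" and eps: "eps > 0" and H0: "H 0 < 0"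
    and scl: "\<forall>\<mu> p. 0 < \<mu> \<and> \<mu> < 1 \<longrightarrow> H (\<mu> *\<^sub>R p) < \<mu> powr \<gamma> * H p"
    and bnd: "\<forall>x0\<in>frontier U. \<forall>y. ext0 U u y \<le> Cb * norm (y - x0)" and Cb: "Cb \<ge> 0"
    and B: "\<forall>y\<in>closure U. norm y \<le> B" and B0: "B \<ge> 0"
    and \<mu>: "0 < \<mu>" "\<mu> < 1"
    and x: "x \<in> {y. (\<mu> powr (\<gamma> - 1)) *\<^sub>R y \<in> U} \<inter> {y. h + y \<in> U}"
  shows "(\<mu> / \<mu> powr (\<gamma> - 1)) * ext0 U u ((\<mu> powr (\<gamma> - 1)) *\<^sub>R x) - ext0 U u (h + x)
     \<le> (\<mu> / \<mu> powr (\<gamma> - 1)) * Cb * (norm h + \<bar>\<mu> powr (\<gamma> - 1) - 1\<bar> * (B + norm h))"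
proof -
  define k where "k = \<mu> powr (\<gamma> - 1)"
  define A where "A = \<mu> / k"
  define \<Omega> where "\<Omega> = {y. k *\<^sub>R y \<in> U} \<inter> {y. h + y \<in> U}"
  define M where "M = A * Cb * (norm h + \<bar>k - 1\<bar> * (B + norm h))"
  have k0: "k > 0" using \<mu> by (simp add: k_def)
  have A0: "A > 0" using \<mu> k0 by (simp add: A_def)
  have Ak: "A * k = \<mu>" using k0 by (simp add: A_def)
  have \<mu>k: "\<mu> * k = \<mu> powr \<gamma>"
  proof -
    have "\<mu> powr \<gamma> = \<mu> powr (1 + (\<gamma> - 1))" by simp
    also have "\<dots> = \<mu> powr 1 * k" unfolding k_def by (rule powr_add)
    finally show ?thesis using \<mu> by simp
  qed
  note n = sol_nice[OF sol U(1)]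
  have ce: "continuous_on UNIV (ext0 U u)" by (rule ext0_cont[OF n(3,4) U(1)])
  have nn: "\<And>y. ext0 U u y \<ge> 0" using sol_nonneg[OF sol U eps H0] .
  have M0: "M \<ge> 0" unfolding M_def using A0 Cb B0 by simp
  have Oopen: "open \<Omega>"
  proof -
    have "open ((\<lambda>y. k *\<^sub>R y) -` U)" by (rule open_vimage[OF U(1)]) (auto intro!: continuous_intros)
    moreover have "open ((\<lambda>y. h + y) -` U)" by (rule open_vimage[OF U(1)]) (auto intro!: continuous_intros)
    ultimately show ?thesis unfolding \<Omega>_def by (simp add: vimage_def open_Int)
  qed
  have Obd: "bounded \<Omega>"
  proof (rule boundedI)
    fix y assume "y \<in> \<Omega>"
    then have "h + y \<in> closure U" using closure_subset unfolding \<Omega>_def by blast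
    then have "norm (h + y) \<le> B" using B by blast
    moreover have "norm y \<le> norm (h + y) + norm h"
      using norm_triangle_ineq4[of "h + y" h] by simp
    ultimately show "norm y \<le> B + norm h" by simp
  qed
  have Ocl: "closure \<Omega> \<subseteq> {y. k *\<^sub>R y \<in> closure U} \<inter> {y. h + y \<in> closure U}"
  proof (rule closure_minimal)
    show "\<Omega> \<subseteq> {y. k *\<^sub>R y \<in> closure U} \<inter> {y. h + y \<in> closure U}"
      unfolding \<Omega>_def using closure_subset by blast
    have "closed ((\<lambda>y. k *\<^sub>R y) -` closure U)" by (rule closed_vimage) (auto intro!: continuous_intros)
    moreover have "closed ((\<lambda>y. h + y) -` closure U)" by (rule closed_vimage) (auto intro!: continuous_intros)
    ultimately show "closed ({y. k *\<^sub>R y \<in> closure U} \<inter> {y. h + y \<in> closure U})"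
      by (simp add: vimage_def closed_Int)
  qed
  define v where "v = (\<lambda>y. A * ext0 U u (0 + k *\<^sub>R y))"
  define w where "w = (\<lambda>y. 1 * ext0 U u (h + 1 *\<^sub>R y))"
  have main: "\<forall>y\<in>closure \<Omega>. (\<lambda>y. v y - w y) y \<le> M"
  proof (rule maxp[OF Oopen Obd])
    show "continuous_on (closure \<Omega>) (\<lambda>y. v y - w y)" unfolding v_def w_def
      by (intro continuous_intros continuous_on_compose2[OF ce]) auto
  next
    fix x assume x: "x \<in> \<Omega>" and mx: "\<exists>\<delta>>0. \<forall>y. dist y x < \<delta> \<longrightarrow> v y - w y \<le> v x - w x"
    have kx: "0 + k *\<^sub>R x \<in> U" and hx: "h + 1 *\<^sub>R x \<in> U" using x unfolding \<Omega>_def by auto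
    have eqU: "\<forall>y\<in>U. ext0 U u y = u y" by (simp add: ext0_def)
    have r: "A * k * partial_deriv i u (0 + k *\<^sub>R x + (k * 0) *\<^sub>R axis i 1)
          = 1 * 1 * partial_deriv i u (h + 1 *\<^sub>R x + (1 * 0) *\<^sub>R axis i 1) \<and>
        A * k * k * partial_deriv i (partial_deriv i u) (0 + k *\<^sub>R x)
          \<le> 1 * 1 * 1 * partial_deriv i (partial_deriv i u) (h + 1 *\<^sub>R x)" for i
    proof (rule MP_line[OF mx])
      show "line_data v x i (\<lambda>t. A * k * partial_deriv i u (0 + k *\<^sub>R x + (k * t) *\<^sub>R axis i 1))
          (A * k * k * partial_deriv i (partial_deriv i u) (0 + k *\<^sub>R x))"
        unfolding v_def by (rule line_affine[OF line_nice[OF U(1) kx] k0]) (use n eqU in auto)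
      show "line_data w x i (\<lambda>t. 1 * 1 * partial_deriv i u (h + 1 *\<^sub>R x + (1 * t) *\<^sub>R axis i 1))
          (1 * 1 * 1 * partial_deriv i (partial_deriv i u) (h + 1 *\<^sub>R x))"
        unfolding w_def by (rule line_affine[OF line_nice[OF U(1) hx]]) (use n eqU in auto)
    qed
    have r1: "partial_deriv i u (h + x) = \<mu> * partial_deriv i u (k *\<^sub>R x)" for i
      using r[of i] Ak by simp
    have r2: "\<mu> powr \<gamma> * partial_deriv i (partial_deriv i u) (k *\<^sub>R x) \<le> partial_deriv i (partial_deriv i u) (h + x)" for i
      using r[of i] Ak \<mu>k by (simp add: mult.assoc)
    have g: "grad u (h + x) = \<mu> *\<^sub>R grad u (k *\<^sub>R x)" using r1 by (simp add: grad_def vec_eq_iff)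
    have l: "\<mu> powr \<gamma> * laplacian u (k *\<^sub>R x) \<le> laplacian u (h + x)"
      unfolding laplacian_def sum_distrib_left by (rule sum_mono) (rule r2)
    have e1: "H (grad u (h + x)) = eps * laplacian u (h + x)" using n(5) hx by simp
    have e2: "H (grad u (k *\<^sub>R x)) = eps * laplacian u (k *\<^sub>R x)" using n(5) kx by simp
    have "H (grad u (h + x)) < \<mu> powr \<gamma> * H (grad u (k *\<^sub>R x))" using scl \<mu> g by simp
    also have "\<dots> = eps * (\<mu> powr \<gamma> * laplacian u (k *\<^sub>R x))" using e2 by simp
    also have "\<dots> \<le> eps * laplacian u (h + x)" using l eps by (intro mult_left_mono) auto
    finally show False using e1 by simp
  next
    fix y assume y: "y \<in> frontier \<Omega>"
    then have yc: "y \<in> closure \<Omega>" and yn: "y \<notin> \<Omega>" using Oopen by (auto simp: frontier_def interior_open)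
    have ky: "k *\<^sub>R y \<in> closure U" and hy: "h + y \<in> closure U" using Ocl yc by auto
    show "v y - w y \<le> M"
    proof (cases "k *\<^sub>R y \<in> U")
      case False
      then have "v y = 0" by (simp add: v_def ext0_def)
      then show ?thesis using nn[of "h + y"] M0 by (simp add: w_def)
    next
      case True
      then have "h + y \<notin> U" using yn unfolding \<Omega>_def by auto
      then have hf: "h + y \<in> frontier U" using hy U(1) by (simp add: frontier_def interior_open)
      have w0: "w y = 0" using \<open>h + y \<notin> U\<close> by (simp add: w_def ext0_def)
      have "ext0 U u (k *\<^sub>R y) \<le> Cb * norm (k *\<^sub>R y - (h + y))" using bnd hf by blast
      also have "\<dots> \<le> Cb * (norm h + \<bar>k - 1\<bar> * (B + norm h))"
      proof (rule mult_left_mono[OF _ Cb])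
        have "k *\<^sub>R y - (h + y) = (k - 1) *\<^sub>R y - h" by (simp add: algebra_simps)
        then have "norm (k *\<^sub>R y - (h + y)) \<le> norm ((k - 1) *\<^sub>R y) + norm h"
          using norm_triangle_ineq4 by metis
        moreover have "norm y \<le> B + norm h"
        proof -
          have "norm (h + y) \<le> B" using B hy by blast
          moreover have "norm y \<le> norm (h + y) + norm h" using norm_triangle_ineq4[of "h + y" h] by simp
          ultimately show ?thesis by simp
        qed
        then have "norm ((k - 1) *\<^sub>R y) \<le> \<bar>k - 1\<bar> * (B + norm h)" by (simp add: mult_left_mono)
        ultimately show "norm (k *\<^sub>R y - (h + y)) \<le> norm h + \<bar>k - 1\<bar> * (B + norm h)" by simp
      qed
      finally show ?thesis using A0 w0 by (simp add: v_def M_def mult.assoc mult_left_mono)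
    qed
  qed
  have "x \<in> \<Omega>" using x unfolding \<Omega>_def k_def by simp
  then have "v x - w x \<le> M" using main closure_subset by blast
  then show ?thesis by (simp add: v_def w_def M_def A_def k_def)
qed



lemma lip_half:
  fixes u :: "real^'n \<Rightarrow> real" and h :: "real^'n"
  assumes sol: "is_solution H eps U u" and U: "open U" "bounded U" and eps: "eps > 0" and H0: "H 0 < 0"
    and scl: "\<forall>\<mu> p. 0 < \<mu> \<and> \<mu> < 1 \<longrightarrow> H (\<mu> *\<^sub>R p) < \<mu> powr \<gamma> * H p"
    and bnd: "\<forall>x0\<in>frontier U. \<forall>y. ext0 U u y \<le> Cb * norm (y - x0)" and Cb: "Cb \<ge> 0"
    and B: "\<forall>y\<in>closure U. norm y \<le> B" and B0: "B \<ge> 0"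
    and x: "x \<in> U" and hx: "h + x \<in> U"
  shows "ext0 U u x - ext0 U u (h + x) \<le> Cb * norm h"
proof -
  let ?k = "\<lambda>\<mu>::real. \<mu> powr (\<gamma> - 1)"
  let ?F = "at_left (1::real)"
  note n = sol_nice[OF sol U(1)]
  have ce: "continuous_on UNIV (ext0 U u)" by (rule ext0_cont[OF n(3,4) U(1)])
  have k1: "(?k \<longlongrightarrow> 1) ?F"
  proof -
    have "((\<lambda>\<mu>::real. \<mu> powr (\<gamma> - 1)) \<longlongrightarrow> 1 powr (\<gamma> - 1)) ?F"
      by (rule tendsto_powr) (auto intro!: tendsto_intros)
    then show ?thesis by simp
  qed
  have kx: "((\<lambda>\<mu>. ?k \<mu> *\<^sub>R x) \<longlongrightarrow> x) ?F"
    using tendsto_scaleR[OF k1 tendsto_const[of x]] by simp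
  have evU: "eventually (\<lambda>\<mu>. ?k \<mu> *\<^sub>R x \<in> U) ?F"
    using topological_tendstoD[OF kx U(1) x] .
  have ev01: "eventually (\<lambda>\<mu>::real. \<mu> \<in> {0<..<1}) ?F" by (rule eventually_at_left_real) simp
  define f where "f \<mu> = (\<mu> / ?k \<mu>) * ext0 U u (?k \<mu> *\<^sub>R x) - ext0 U u (h + x)" for \<mu>
  define g where "g \<mu> = (\<mu> / ?k \<mu>) * Cb * (norm h + \<bar>?k \<mu> - 1\<bar> * (B + norm h))" for \<mu>
  have ft: "(f \<longlongrightarrow> (1 / 1) * ext0 U u x - ext0 U u (h + x)) ?F"
    unfolding f_def
    by (intro tendsto_intros k1 continuous_on_tendsto_compose[OF ce kx]) (auto simp: at_left_eq)
  have gt: "(g \<longlongrightarrow> (1 / 1) * Cb * (norm h + \<bar>1 - 1\<bar> * (B + norm h))) ?F"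
    unfolding g_def by (intro tendsto_intros k1) (auto simp: at_left_eq)
  have ev: "eventually (\<lambda>\<mu>. f \<mu> \<le> g \<mu>) ?F"
    using evU ev01
  proof eventually_elim
    case (elim \<mu>)
    then show ?case unfolding f_def g_def
      by (intro comp_mu[OF sol U eps H0 scl bnd Cb B B0]) (use hx in auto)
  qed
  have "(1 / 1) * ext0 U u x - ext0 U u (h + x) \<le> (1 / 1) * Cb * (norm h + \<bar>1 - 1\<bar> * (B + norm h))"
    by (rule tendsto_le[OF _ gt ft ev]) simp
  then show ?thesis by simp
qed



lemma deriv_lip_bound:
  fixes f :: "real \<Rightarrow> real"
  assumes d: "(f has_real_derivative D) (at 0)" and r: "r > 0"
    and lip: "\<And>t. \<bar>t\<bar> < r \<Longrightarrow> \<bar>f t - f 0\<bar> \<le> L * \<bar>t\<bar>"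
  shows "\<bar>D\<bar> \<le> L"
proof -
  have t: "((\<lambda>h. (f (0 + h) - f 0) / h) \<longlongrightarrow> D) (at 0)" using d by (simp add: DERIV_def)
  then have t2: "((\<lambda>h. \<bar>(f (0 + h) - f 0) / h\<bar>) \<longlongrightarrow> \<bar>D\<bar>) (at 0)" by (rule tendsto_rabs)
  have ev: "eventually (\<lambda>h. \<bar>(f (0 + h) - f 0) / h\<bar> \<le> L) (at (0::real))"
  proof -
    have "eventually (\<lambda>h::real. h \<noteq> 0 \<and> dist h 0 < r) (at 0)"
      using r by (auto simp: eventually_at intro!: exI[of _ r])
    then show ?thesis
    proof eventually_elim
      case (elim h)
      then have "\<bar>f h - f 0\<bar> \<le> L * \<bar>h\<bar>" using lip by simp
      then show ?case using elim by (simp add: abs_divide divide_le_eq)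
    qed
  qed
  show ?thesis by (rule tendsto_le[OF _ tendsto_const t2 ev]) simp
qed

lemma grad_lip_bound:
  fixes u :: "real^'n \<Rightarrow> real"
  assumes U: "open U" and x: "x \<in> U" and du: "u differentiable (at x)"
    and lip: "\<forall>y\<in>U. \<bar>u y - u x\<bar> \<le> L * norm (y - x)"
  shows "norm (grad u x) \<le> real CARD('n) * L"
proof -
  obtain r where r: "r > 0" "ball x r \<subseteq> U" using U x openE by blast
  have pd: "\<bar>partial_deriv i u x\<bar> \<le> L" for i
  proof (rule deriv_lip_bound[OF _ r(1)])
    show "((\<lambda>t. u (x + t *\<^sub>R axis i 1)) has_real_derivative partial_deriv i u x) (at 0)"
      using dir_deriv[of u x 0 "axis i 1"] du by (simp add: grad_axis)
    fix t :: real assume t: "\<bar>t\<bar> < r"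
    have "x + t *\<^sub>R axis i 1 \<in> U" using r t by (auto simp: dist_norm)
    then show "\<bar>u (x + t *\<^sub>R axis i 1) - u (x + 0 *\<^sub>R axis i 1)\<bar> \<le> L * \<bar>t\<bar>" using lip by force
  qed
  have "norm (grad u x) \<le> (\<Sum>i\<in>UNIV. \<bar>grad u x $ i\<bar>)" by (rule norm_le_l1_cart)
  also have "\<dots> \<le> (\<Sum>i\<in>(UNIV::'n set). L)" using pd by (intro sum_mono) (simp add: grad_def)
  also have "\<dots> = real CARD('n) * L" by simp
  finally show ?thesis .
qed



lemma taylor2_lower:
  fixes g g' g'' :: "real \<Rightarrow> real"
  assumes d1: "\<And>t. 0 \<le> t \<Longrightarrow> t \<le> 1 \<Longrightarrow> (g has_real_derivative g' t) (at t)"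
    and d2: "\<And>t. 0 \<le> t \<Longrightarrow> t \<le> 1 \<Longrightarrow> (g' has_real_derivative g'' t) (at t)"
    and lb: "\<And>t. 0 \<le> t \<Longrightarrow> t \<le> 1 \<Longrightarrow> g'' t \<ge> - M"
  shows "g 1 \<ge> g 0 + g' 0 - M / 2"
proof -
  define h where "h t = g t - g 0 - g' 0 * t + M * t^2 / 2" for t
  define h' where "h' t = g' t - g' 0 + M * t" for t
  have dh: "(h has_real_derivative h' t) (at t)" if "0 \<le> t" "t \<le> 1" for t
    unfolding h_def h'_def using d1[OF that] by (auto intro!: derivative_eq_intros)
  have dh': "(h' has_real_derivative g'' t + M) (at t)" if "0 \<le> t" "t \<le> 1" for t
    unfolding h'_def using d2[OF that] by (auto intro!: derivative_eq_intros)
  have h'nn: "h' t \<ge> 0" if "0 \<le> t" "t \<le> 1" for t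
  proof -
    have "h' 0 \<le> h' t"
      by (rule DERIV_nonneg_imp_nondecreasing[OF that(1)]) (use dh' lb that in force)
    then show ?thesis by (simp add: h'_def)
  qed
  have "h 0 \<le> h 1"
    by (rule DERIV_nonneg_imp_nondecreasing[of 0 1]) (use dh h'nn in force)+
  then show ?thesis by (simp add: h_def)
qed



lemma grad_inner: "grad f p \<bullet> d = (\<Sum>i\<in>UNIV. d $ i * partial_deriv i f p)"
  by (simp add: grad_def inner_vec_def mult.commute)

lemma local_ext:
  fixes \<phi> :: "real^'n \<Rightarrow> real" and U :: "(real^'n) set"
  assumes r: "r > 0" and sm: "smooth_on (ball x0 r) \<phi>" and gnz: "\<forall>y\<in>ball x0 r. grad \<phi> y \<noteq> 0"
    and eq: "U \<inter> ball x0 r = {y\<in>ball x0 r. \<phi> y < 0}" and U: "open U"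
  shows "\<exists>\<epsilon>>0. \<exists>\<rho>>0. \<forall>x\<in>frontier U. dist x x0 < \<epsilon> \<longrightarrow> (\<exists>z. dist x z = \<rho> \<and> ball z \<rho> \<inter> U = {})"
proof -
  define B where "B = ball x0 r"
  define K where "K = cball x0 (r / 2)"
  have KB: "K \<subseteq> B" using r by (auto simp: K_def B_def)
  have Kc: "compact K" "K \<noteq> {}" using r by (auto simp: K_def)
  have c2: "C_k_on 2 B \<phi>" using sm by (simp add: smooth_on_def B_def)
  then have sm1: "\<phi> differentiable_on B" "continuous_on B \<phi>"
    and sm2: "\<And>i. partial_deriv i \<phi> differentiable_on B" "\<And>i. continuous_on B (partial_deriv i \<phi>)"
    and sm3: "\<And>i j. continuous_on B (partial_deriv j (partial_deriv i \<phi>))"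
    by (simp_all add: numeral_2_eq_2)
  have oB: "open B" by (simp add: B_def)
  have dphi: "\<phi> differentiable (at y)" if "y \<in> B" for y
    using sm1(1) oB that differentiable_on_eq_differentiable_at by blast
  have dphii: "partial_deriv i \<phi> differentiable (at y)" if "y \<in> B" for y i
    using sm2(1) oB that differentiable_on_eq_differentiable_at by blast
  have cg: "continuous_on K (\<lambda>y. norm (grad \<phi> y))"
  proof -
    have "continuous_on K (\<lambda>y. \<chi> i. partial_deriv i \<phi> y)"
      by (rule continuous_on_vec_lambda) (rule continuous_on_subset[OF sm2(2) KB])
    then show ?thesis unfolding grad_def by (rule continuous_on_norm)
  qed
  obtain p where p: "p \<in> K" "\<forall>y\<in>K. norm (grad \<phi> p) \<le> norm (grad \<phi> y)"
    using continuous_attains_inf[OF Kc cg] by blast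
  define c where "c = norm (grad \<phi> p)"
  have c0: "c > 0" using gnz p(1) KB by (auto simp: c_def B_def)
  define F where "F y = (\<Sum>i\<in>UNIV. \<Sum>j\<in>UNIV. \<bar>partial_deriv j (partial_deriv i \<phi>) y\<bar>)" for y
  have cF: "continuous_on K F" unfolding F_def
    by (intro continuous_intros continuous_on_subset[OF sm3 KB])
  obtain q where q: "q \<in> K" "\<forall>y\<in>K. F y \<le> F q"
    using continuous_attains_sup[OF Kc cF] by blast
  define L where "L = F q"
  have L0: "L \<ge> 0" by (simp add: L_def F_def sum_nonneg)
  define \<rho> where "\<rho> = min (r / 8) (c / (L + 1))"
  have \<rho>0: "\<rho> > 0" using r c0 L0 by (simp add: \<rho>_def)
  have \<rho>c: "\<rho> * (L + 1) \<le> c"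
  proof -
    have "\<rho> \<le> c / (L + 1)" by (simp add: \<rho>_def)
    then show ?thesis using L0 by (simp add: pos_le_divide_eq)
  qed
  have "\<forall>x\<in>frontier U. dist x x0 < r / 4 \<longrightarrow> (\<exists>z. dist x z = \<rho> \<and> ball z \<rho> \<inter> U = {})"
  proof (intro ballI impI)
    fix x assume xf: "x \<in> frontier U" and xd: "dist x x0 < r / 4"
    have xB: "x \<in> B" using xd r by (simp add: B_def dist_commute)
    have xnU: "x \<notin> U" using xf U by (simp add: frontier_def interior_open)
    have xcl: "x \<in> closure U" using xf by (simp add: frontier_def)
    have \<phi>x: "\<phi> x = 0"
    proof (rule ccontr)
      assume ne: "\<phi> x \<noteq> 0"
      show False
      proof (cases "\<phi> x < 0")
        case True then show False using xnU xB eq by (auto simp: B_def)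
      next
        case False
        then have pos: "\<phi> x > 0" using ne by simp
        define W where "W = B \<inter> \<phi> -` {0<..}"
        have "open W" unfolding W_def using continuous_open_preimage[OF sm1(2) oB] by auto
        moreover have "x \<in> W" using xB pos by (simp add: W_def)
        ultimately have "W \<inter> closure U \<noteq> {}" using xcl by blast
        then have "W \<inter> U \<noteq> {}" using open_Int_closure_eq_empty[OF \<open>open W\<close>] by blast
        then obtain y where yW: "y \<in> W" and yU: "y \<in> U" by blast
        then have "y \<in> U \<inter> ball x0 r" by (simp add: W_def B_def)
        then have "y \<in> {y\<in>ball x0 r. \<phi> y < 0}" unfolding eq .
        then show False using yW by (simp add: W_def)
      qed
    qed
    define gx where "gx = grad \<phi> x"
    have ngx: "norm gx \<ge> c" using p xd r by (simp add: gx_def c_def K_def dist_commute)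
    define \<nu> where "\<nu> = (1 / norm gx) *\<^sub>R gx"
    have gx0: "norm gx > 0" using ngx c0 by linarith
    have n\<nu>: "norm \<nu> = 1" using gx0 by (simp add: \<nu>_def)
    have gx\<nu>: "gx = norm gx *\<^sub>R \<nu>" using gx0 by (simp add: \<nu>_def)
    define z where "z = x + \<rho> *\<^sub>R \<nu>"
    show "\<exists>z. dist x z = \<rho> \<and> ball z \<rho> \<inter> U = {}"
    proof (intro exI[of _ z] conjI)
      show "dist x z = \<rho>" using n\<nu> \<rho>0 by (simp add: z_def dist_norm)
      show "ball z \<rho> \<inter> U = {}"
      proof (rule ccontr)
        assume "ball z \<rho> \<inter> U \<noteq> {}"
        then obtain y where yb: "dist z y < \<rho>" and yU: "y \<in> U" by auto
        define d where "d = y - x"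
        have nd: "norm d < 2 * \<rho>"
        proof -
          have "norm d \<le> norm (y - z) + norm (z - x)"
            unfolding d_def using norm_triangle_ineq[of "y - z" "z - x"] by simp
          moreover have "norm (z - x) = \<rho>" using n\<nu> \<rho>0 by (simp add: z_def)
          ultimately show ?thesis using yb by (simp add: dist_norm norm_minus_commute)
        qed
        have seg: "x + t *\<^sub>R d \<in> K" if "0 \<le> t" "t \<le> 1" for t
        proof -
          have "norm (t *\<^sub>R d) \<le> norm d" using that by (simp add: mult_left_le_one_le)
          then have "norm (x + t *\<^sub>R d - x0) \<le> norm (x - x0) + norm d"
            using norm_triangle_ineq[of "x - x0" "t *\<^sub>R d"] by (simp add: algebra_simps)
          moreover have "\<rho> \<le> r / 8" unfolding \<rho>_def by (rule min.cobounded1)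
          ultimately show ?thesis using xd nd by (simp add: K_def dist_norm norm_minus_commute)
        qed
        have "y \<in> K" using seg[of 1] by (simp add: d_def)
        then have yB: "y \<in> B" using KB by blast
        have "y \<in> U \<inter> ball x0 r" using yU yB by (simp add: B_def)
        then have "y \<in> {y\<in>ball x0 r. \<phi> y < 0}" unfolding eq .
        then have \<phi>y: "\<phi> y < 0" by simp
        define g where "g t = \<phi> (x + t *\<^sub>R d)" for t
        define g' where "g' t = (\<Sum>i\<in>UNIV. d $ i * partial_deriv i \<phi> (x + t *\<^sub>R d))" for t
        define g'' where "g'' t = (\<Sum>i\<in>UNIV. d $ i * (\<Sum>j\<in>UNIV. d $ j * partial_deriv j (partial_deriv i \<phi>) (x + t *\<^sub>R d)))" for t
        have "g 1 \<ge> g 0 + g' 0 - (L * (norm d)^2) / 2"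
        proof (rule taylor2_lower)
          fix t :: real assume t: "0 \<le> t" "t \<le> 1"
          have inB: "x + t *\<^sub>R d \<in> B" using seg[OF t] KB by blast
          show "(g has_real_derivative g' t) (at t)"
            unfolding g_def g'_def using dir_deriv[of \<phi> x t d] dphi[OF inB] by (simp add: grad_inner)
          show "(g' has_real_derivative g'' t) (at t)"
            unfolding g'_def g''_def
          proof (intro DERIV_sum DERIV_cmult)
            fix i
            show "((\<lambda>t. partial_deriv i \<phi> (x + t *\<^sub>R d)) has_real_derivative
                (\<Sum>j\<in>UNIV. d $ j * partial_deriv j (partial_deriv i \<phi>) (x + t *\<^sub>R d))) (at t)"
              using dir_deriv[of "partial_deriv i \<phi>" x t d] dphii[OF inB] by (simp add: grad_inner)
          qed
          have "\<bar>g'' t\<bar> \<le> (\<Sum>i\<in>UNIV. \<Sum>j\<in>UNIV. \<bar>d $ i\<bar> * (\<bar>d $ j\<bar> * \<bar>partial_deriv j (partial_deriv i \<phi>) (x + t *\<^sub>R d)\<bar>))"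
            unfolding g''_def
          proof (rule order_trans[OF sum_abs], rule sum_mono)
            fix i
            let ?a = "\<lambda>j. partial_deriv j (partial_deriv i \<phi>) (x + t *\<^sub>R d)"
            have "\<bar>\<Sum>j\<in>UNIV. d $ j * ?a j\<bar> \<le> (\<Sum>j\<in>UNIV. \<bar>d $ j * ?a j\<bar>)" by (rule sum_abs)
            also have "\<dots> = (\<Sum>j\<in>UNIV. \<bar>d $ j\<bar> * \<bar>?a j\<bar>)" by (simp add: abs_mult)
            finally have S: "\<bar>\<Sum>j\<in>UNIV. d $ j * ?a j\<bar> \<le> (\<Sum>j\<in>UNIV. \<bar>d $ j\<bar> * \<bar>?a j\<bar>)" .
            have "\<bar>d $ i * (\<Sum>j\<in>UNIV. d $ j * ?a j)\<bar> = \<bar>d $ i\<bar> * \<bar>\<Sum>j\<in>UNIV. d $ j * ?a j\<bar>"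
              by (rule abs_mult)
            also have "\<dots> \<le> \<bar>d $ i\<bar> * (\<Sum>j\<in>UNIV. \<bar>d $ j\<bar> * \<bar>?a j\<bar>)"
              by (rule mult_left_mono[OF S]) simp
            also have "\<dots> = (\<Sum>j\<in>UNIV. \<bar>d $ i\<bar> * (\<bar>d $ j\<bar> * \<bar>?a j\<bar>))"
              by (rule sum_distrib_left)
            finally show "\<bar>d $ i * (\<Sum>j\<in>UNIV. d $ j * ?a j)\<bar> \<le> (\<Sum>j\<in>UNIV. \<bar>d $ i\<bar> * (\<bar>d $ j\<bar> * \<bar>?a j\<bar>))" .
          qed
          also have "\<dots> \<le> (\<Sum>i\<in>UNIV. \<Sum>j\<in>UNIV. norm d * (norm d * \<bar>partial_deriv j (partial_deriv i \<phi>) (x + t *\<^sub>R d)\<bar>))"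
            by (intro sum_mono mult_mono component_le_norm_cart) auto
          also have "\<dots> = (norm d)^2 * F (x + t *\<^sub>R d)"
            by (simp add: F_def sum_distrib_left power2_eq_square mult.assoc)
          also have "\<dots> \<le> (norm d)^2 * L" using q seg[OF t] by (simp add: L_def mult_left_mono)
          finally show "g'' t \<ge> - (L * (norm d)^2)" by (simp add: mult.commute)
        qed
        moreover have "g 1 = \<phi> y" by (simp add: g_def d_def)
        moreover have "g 0 = 0" using \<phi>x by (simp add: g_def)
        moreover have "g' 0 = gx \<bullet> d" by (simp add: g'_def gx_def grad_inner)
        ultimately have T: "\<phi> y \<ge> gx \<bullet> d - L * (norm d)^2 / 2" by simp
        have "\<nu> \<bullet> d > (norm d)^2 / (2 * \<rho>)"
        proof -
          have "y - z = d - \<rho> *\<^sub>R \<nu>" by (simp add: d_def z_def algebra_simps)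
          moreover have nn: "\<nu> \<bullet> \<nu> = 1" using n\<nu> by (simp add: norm_eq_1)
          moreover have "(d - \<rho> *\<^sub>R \<nu>) \<bullet> (d - \<rho> *\<^sub>R \<nu>) = d \<bullet> d - 2 * \<rho> * (\<nu> \<bullet> d) + \<rho>^2 * (\<nu> \<bullet> \<nu>)"
            by (simp add: inner_diff_left inner_diff_right inner_commute power2_eq_square algebra_simps)
          ultimately have "(norm (y - z))^2 = (norm d)^2 - 2 * \<rho> * (\<nu> \<bullet> d) + \<rho>^2"
            by (simp add: power2_norm_eq_inner)
          moreover have "(norm (y - z))^2 < \<rho>^2" using yb \<rho>0
            by (simp add: dist_norm norm_minus_commute power_strict_mono)
          ultimately have "2 * \<rho> * (\<nu> \<bullet> d) > (norm d)^2" by simp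
          then show ?thesis using \<rho>0 by (simp add: field_simps)
        qed
        then have "norm gx * (\<nu> \<bullet> d) > norm gx * ((norm d)^2 / (2 * \<rho>))"
          using gx0 by (rule mult_strict_left_mono)
        moreover have "gx \<bullet> d = norm gx * (\<nu> \<bullet> d)" by (metis gx\<nu> inner_scaleR_left)
        ultimately have "gx \<bullet> d > norm gx * ((norm d)^2 / (2 * \<rho>))" by simp
        moreover have "norm gx * ((norm d)^2 / (2 * \<rho>)) \<ge> c * ((norm d)^2 / (2 * \<rho>))"
          using ngx \<rho>0 by (intro mult_right_mono) auto
        moreover have "c * ((norm d)^2 / (2 * \<rho>)) \<ge> L * (norm d)^2 / 2"
        proof -
          have "c / \<rho> \<ge> L + 1" using \<rho>c \<rho>0 by (simp add: field_simps)
          then have "c / \<rho> \<ge> L" by simp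
          then have "(c / \<rho>) * ((norm d)^2 / 2) \<ge> L * ((norm d)^2 / 2)" by (intro mult_right_mono) auto
          then show ?thesis by (simp add: field_simps)
        qed
        ultimately have "\<phi> y > 0" using T by linarith
        then show False using \<phi>y by simp
      qed
    qed
  qed
  moreover have "r / 4 > 0" using r by simp
  ultimately show ?thesis using \<rho>0 by blast
qed



lemma shrink:
  fixes x z :: "real^'n"
  assumes "ball z \<rho> \<inter> U = {}" "dist x z = \<rho>" "0 < \<rho>'" "\<rho>' \<le> \<rho>"
  shows "\<exists>z'. dist x z' = \<rho>' \<and> ball z' \<rho>' \<inter> U = {}"
proof (intro exI[of _ "x + (\<rho>' / \<rho>) *\<^sub>R (z - x)"] conjI)
  have \<rho>: "\<rho> > 0" using assms by simp
  have nz: "norm (z - x) = \<rho>" using assms(2) by (simp add: dist_norm norm_minus_commute)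
  show "dist x (x + (\<rho>' / \<rho>) *\<^sub>R (z - x)) = \<rho>'" using \<rho> assms(3) nz by (simp add: dist_norm)
  have "ball (x + (\<rho>' / \<rho>) *\<^sub>R (z - x)) \<rho>' \<subseteq> ball z \<rho>"
  proof
    fix y assume y: "y \<in> ball (x + (\<rho>' / \<rho>) *\<^sub>R (z - x)) \<rho>'"
    have "z - (x + (\<rho>' / \<rho>) *\<^sub>R (z - x)) = (1 - \<rho>' / \<rho>) *\<^sub>R (z - x)" by (simp add: algebra_simps)
    then have "norm (z - (x + (\<rho>' / \<rho>) *\<^sub>R (z - x))) = (1 - \<rho>' / \<rho>) * \<rho>"
      using nz assms(3,4) \<rho> by simp
    also have "\<dots> = \<rho> - \<rho>'" using \<rho> by (simp add: field_simps)
    finally have "dist z (x + (\<rho>' / \<rho>) *\<^sub>R (z - x)) = \<rho> - \<rho>'" by (simp add: dist_norm)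
    then show "y \<in> ball z \<rho>" using y dist_triangle[of z y "x + (\<rho>' / \<rho>) *\<^sub>R (z - x)"] by simp
  qed
  then show "ball (x + (\<rho>' / \<rho>) *\<^sub>R (z - x)) \<rho>' \<inter> U = {}" using assms(1) by blast
qed

lemma ext_uniform:
  fixes U :: "(real^'n) set"
  assumes "smooth_bounded_domain U"
  shows "\<exists>\<rho>>0. \<forall>x\<in>frontier U. \<exists>z. dist x z = \<rho> \<and> ball z \<rho> \<inter> U = {}"
proof -
  have U: "open U" "bounded U" using assms by (auto simp: smooth_bounded_domain_def)
  have loc: "\<forall>x0\<in>frontier U. \<exists>\<epsilon>>0. \<exists>\<rho>>0. \<forall>x\<in>frontier U. dist x x0 < \<epsilon> \<longrightarrow> (\<exists>z. dist x z = \<rho> \<and> ball z \<rho> \<inter> U = {})"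
  proof
    fix x0 assume "x0 \<in> frontier U"
    then obtain r \<phi> where "r > 0" "smooth_on (ball x0 r) \<phi>" "\<forall>y\<in>ball x0 r. grad \<phi> y \<noteq> 0"
      "U \<inter> ball x0 r = {y\<in>ball x0 r. \<phi> y < 0}"
      using assms unfolding smooth_bounded_domain_def by blast
    then show "\<exists>\<epsilon>>0. \<exists>\<rho>>0. \<forall>x\<in>frontier U. dist x x0 < \<epsilon> \<longrightarrow> (\<exists>z. dist x z = \<rho> \<and> ball z \<rho> \<inter> U = {})"
      using local_ext[OF _ _ _ _ U(1)] by blast
  qed
  then obtain E where E: "\<forall>x0\<in>frontier U. E x0 > 0 \<and> (\<exists>\<rho>>0. \<forall>x\<in>frontier U. dist x x0 < E x0 \<longrightarrow> (\<exists>z. dist x z = \<rho> \<and> ball z \<rho> \<inter> U = {}))"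
    by (metis (no_types, lifting) bchoice)
  then obtain P where P: "\<forall>x0\<in>frontier U. P x0 > 0 \<and> (\<forall>x\<in>frontier U. dist x x0 < E x0 \<longrightarrow> (\<exists>z. dist x z = P x0 \<and> ball z (P x0) \<inter> U = {}))"
    by (metis (no_types, lifting) bchoice)
  show ?thesis
  proof (cases "frontier U = {}")
    case True then show ?thesis by (auto intro: exI[of _ 1])
  next
    case False
    have cpt: "compact (frontier U)" using U(2) by (rule compact_frontier_bounded)
    have cov: "frontier U \<subseteq> (\<Union>x0\<in>frontier U. ball x0 (E x0))" using E by force
    obtain T where T: "T \<subseteq> frontier U" "finite T" "frontier U \<subseteq> (\<Union>x0\<in>T. ball x0 (E x0))"
      using compactE_image[OF cpt _ cov] by blast
    have Tne: "T \<noteq> {}" using T(3) False by auto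
    define \<rho> where "\<rho> = Min (P ` T)"
    have \<rho>0: "\<rho> > 0" unfolding \<rho>_def using T Tne P by (subst Min_gr_iff) auto
    show ?thesis
    proof (intro exI[of _ \<rho>] conjI ballI)
      show "\<rho> > 0" by (rule \<rho>0)
      fix x assume x: "x \<in> frontier U"
      then obtain t where t: "t \<in> T" "x \<in> ball t (E t)" using T(3) by blast
      then have "dist x t < E t" by (simp add: dist_commute)
      then obtain z where z: "dist x z = P t" "ball z (P t) \<inter> U = {}" using P t T(1) x by blast
      have "\<rho> \<le> P t" unfolding \<rho>_def using T t by simp
      then show "\<exists>z. dist x z = \<rho> \<and> ball z \<rho> \<inter> U = {}" using shrink[OF z(2) z(1) \<rho>0] by blast
    qed
  qed
qed



theorem theorem3:
  fixes U :: "(real^'n) set" and H :: "real^'n \<Rightarrow> real"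
    and u :: "real \<Rightarrow> real^'n \<Rightarrow> real"
  assumes U: "smooth_bounded_domain U"
    and H1: "smooth_on UNIV H" "H 0 < 0"
    and H2: "filterlim (\<lambda>p. H p / norm p) at_top at_infinity"
    and H3: "\<exists>\<gamma>>0. \<exists>\<delta>>0. \<forall>p. grad H p \<bullet> p - \<gamma> * H p \<ge> \<delta>"
    and sol: "\<And>eps. 0 < eps \<Longrightarrow> eps < 1 \<Longrightarrow> is_solution H eps U (u eps)"
  shows "\<exists>C. \<forall>eps. 0 < eps \<and> eps < 1 \<longrightarrow>
           (\<forall>x\<in>U. \<bar>u eps x\<bar> \<le> C \<and> norm (grad (u eps) x) \<le> C)"
proof -
  have Uo: "open U" "bounded U" "U \<noteq> {}" using U by (auto simp: smooth_bounded_domain_def)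
  obtain \<gamma> \<delta> where \<gamma>: "\<gamma> > 0" and \<delta>: "\<delta> > 0" and H3': "\<forall>p. grad H p \<bullet> p - \<gamma> * H p \<ge> \<delta>"
    using H3 by blast
  have scl: "\<forall>\<mu> p. 0 < \<mu> \<and> \<mu> < 1 \<longrightarrow> H (\<mu> *\<^sub>R p) < \<mu> powr \<gamma> * H p"
    using scal[OF H1(1) H3' \<delta>] by blast
  obtain R where R: "R > 0" and HR: "\<forall>p. norm p \<ge> R \<longrightarrow> H p > 0"
  proof -
    have "eventually (\<lambda>p. 1 \<le> H p / norm p) at_infinity" using H2 by (simp add: filterlim_at_top)
    then obtain b where b: "\<forall>p. b \<le> norm p \<longrightarrow> 1 \<le> H p / norm p" by (auto simp: eventually_at_infinity)
    have "\<forall>p. norm p \<ge> max b 1 \<longrightarrow> H p > 0"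
    proof (intro allI impI)
      fix p :: "real^'n" assume p: "norm p \<ge> max b 1"
      then have "1 \<le> H p / norm p" "norm p > 0" using b by auto
      then have "norm p \<le> H p" by (simp add: le_divide_eq)
      then show "H p > 0" using \<open>norm p > 0\<close> by linarith
    qed
    then show ?thesis using that[of "max b 1"] by simp
  qed
  obtain B0 where B0: "\<forall>y\<in>closure U. norm y \<le> B0"
    using bounded_closure[OF Uo(2)] by (auto simp: bounded_iff)
  define B where "B = max B0 0"
  have B: "\<forall>y\<in>closure U. norm y \<le> B" and Bnn: "B \<ge> 0" using B0 by (auto simp: B_def)
  obtain \<rho> where \<rho>: "\<rho> > 0" and ex: "\<forall>x\<in>frontier U. \<exists>z. dist x z = \<rho> \<and> ball z \<rho> \<inter> U = {}"
    using ext_uniform[OF U] by blast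
  define N where "N = CARD('n)"
  define D where "D = 2 * B + \<rho> + 1"
  have D0: "D > 0" using Bnn \<rho> by (simp add: D_def)
  define Cb where "Cb = (R * D ^ (2 * N + 1)) * real (2 * N) / \<rho> ^ (2 * N + 1)"
  have Cb0: "Cb \<ge> 0" using R D0 \<rho> by (simp add: Cb_def)
  have "U \<noteq> UNIV" using Uo(2) by auto
  then obtain xf where xf: "xf \<in> frontier U" using frontier_not_empty[OF Uo(3)] by blast
  have frcl: "frontier U \<subseteq> closure U" by (simp add: frontier_def)
  show ?thesis
  proof (intro exI[of _ "max (real N * Cb) (Cb * (2 * B))"] allI impI ballI conjI)
    fix eps :: real and x assume e: "0 < eps \<and> eps < 1" and x: "x \<in> U"
    have s: "is_solution H eps U (u eps)" using sol e by blast
    have eps: "eps > 0" using e by simp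
    have bnd: "\<forall>x0\<in>frontier U. \<forall>y. ext0 U (u eps) y \<le> Cb * norm (y - x0)"
    proof (intro ballI allI)
      fix x0 y assume x0: "x0 \<in> frontier U"
      obtain z where z: "dist x0 z = \<rho>" "ball z \<rho> \<inter> U = {}" using ex x0 by blast
      have Db: "\<forall>y\<in>U. norm (y - z) \<le> D"
      proof
        fix y assume "y \<in> U"
        then have ny: "norm y \<le> B" using B closure_subset by blast
        have nx0: "norm x0 \<le> B" using B x0 frcl by blast
        have "norm z \<le> norm x0 + \<rho>" using z(1) norm_triangle_ineq2[of z x0]
          by (simp add: dist_norm norm_minus_commute)
        then show "norm (y - z) \<le> D" using norm_triangle_ineq4[of y z] ny nx0 by (simp add: D_def)
      qed
      have "ext0 U (u eps) y \<le> (R * D ^ (2 * CARD('n) + 1)) * real (2 * CARD('n)) * norm (y - x0) / \<rho> ^ (2 * CARD('n) + 1)"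
        by (rule barrier[OF s Uo(1,2) eps R HR \<rho> z(2) z(1) Db D0])
      also have "\<dots> = Cb * norm (y - x0)" by (simp add: Cb_def N_def)
      finally show "ext0 U (u eps) y \<le> Cb * norm (y - x0)" .
    qed
    have e0: "ext0 U (u eps) y = u eps y" if "y \<in> U" for y using that by (simp add: ext0_def)
    have lip: "\<forall>y\<in>U. \<bar>u eps y - u eps x\<bar> \<le> Cb * norm (y - x)"
    proof
      fix y assume y: "y \<in> U"
      have a: "ext0 U (u eps) x - ext0 U (u eps) ((y - x) + x) \<le> Cb * norm (y - x)"
        by (rule lip_half[OF s Uo(1,2) eps H1(2) scl bnd Cb0 B Bnn x]) (use y in simp)
      have b: "ext0 U (u eps) y - ext0 U (u eps) ((x - y) + y) \<le> Cb * norm (x - y)"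
        by (rule lip_half[OF s Uo(1,2) eps H1(2) scl bnd Cb0 B Bnn y]) (use x in simp)
      show "\<bar>u eps y - u eps x\<bar> \<le> Cb * norm (y - x)"
        using a b e0[OF x] e0[OF y] by (simp add: norm_minus_commute abs_le_iff)
    qed
    have du: "u eps differentiable (at x)" using sol_nice(1)[OF s Uo(1)] x by blast
    have "norm (grad (u eps) x) \<le> real CARD('n) * Cb" by (rule grad_lip_bound[OF Uo(1) x du lip])
    then show "norm (grad (u eps) x) \<le> max (real N * Cb) (Cb * (2 * B))" by (simp add: N_def)
    have nn: "u eps x \<ge> 0" using sol_nonneg[OF s Uo(1,2) eps H1(2), of x] e0[OF x] by simp
    have "ext0 U (u eps) x \<le> Cb * norm (x - xf)" using bnd xf by blast
    then have "u eps x \<le> Cb * norm (x - xf)" using e0[OF x] by simp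
    also have "\<dots> \<le> Cb * (2 * B)"
    proof (rule mult_left_mono[OF _ Cb0])
      have "norm x \<le> B" using B x closure_subset by blast
      moreover have "norm xf \<le> B" using B xf frcl by blast
      ultimately show "norm (x - xf) \<le> 2 * B" using norm_triangle_ineq4[of x xf] by simp
    qed
    finally show "\<bar>u eps x\<bar> \<le> max (real N * Cb) (Cb * (2 * B))" using nn by simp
  qed
qed


end
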